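(* Let $(X,d,G)$ be a $G$-system and $\{F_n\}$ a tempered Følner sequence of $G$. Then the maps $\mu\mapsto\overline{\mathrm{mdim}}_M(\mu,\{F_n\},d)$ and $\mu\mapsto\underline{\mathrm{mdim}}_M(\mu,\{F_n\},d)$ from $M(X,G)$ to $[0,+\infty]$ are upper semi-continuous (with respect to the weak* topology).
   Context: $G$ is a countably infinite discrete amenable group; $(X,d,G)$ a compact metric space with continuous $G$-action by homeomorphisms. Følner: nonempty finite $F_n$ with $|gF_n\triangle F_n|/|F_n|\to0$; tempered: $|\bigcup_{j<n}F_j^{-1}F_n|\le C|F_n|$ for some $C>0$. $M(X,G)$: invariant Borel probability measures (weak* ); $E(X,G)$: ergodic ones; $\mathrm{co}(E(X,G))$: finite convex combinations, uniquely written $\mu=\sum_j\lambda_j\mu_j$ with distinct ergodic $\mu_j$, $\lambda_j>0$. For a finite Borel partition $\alpha$, $h_\nu(G,\alpha)=\lim_n\frac1{|F_n|}H_\nu(\bigvee_{g\in F_n}g^{-1}\alpha)$; for ergodic $\nu$, $h_\nu(\epsilon)=\inf\{h_\nu(G,\alpha):\mathrm{diam}(\alpha)\le\epsilon\}$; $F(\mu,\epsilon)=\sum_j\lambda_jh_{\mu_j}(\epsilon)$. $M_G(\mu)$: families $(\mu_\epsilon)_{\epsilon>0}\subset\mathrm{co}(E(X,G))$ with $\mu_\epsilon\to\mu$ weak* as $\epsilon\to0$. $\overline{\mathrm{mdim}}_M(\mu,\{F_n\},d)=\sup_{(\mu_\epsilon)\in M_G(\mu)}\limsup_{\epsilon\to0}F(\mu_\epsilon,\epsilon)/\log\frac1\epsilon$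 and $\underline{\mathrm{mdim}}_M(\mu,\{F_n\},d)$ is the same with $\liminf_{\epsilon\to0}$. (The paper allows equivalent choices of measure-theoretic $\epsilon$-entropy along $\{F_n\}$, e.g. upper Katok $\epsilon$-entropy, in place of $h_\nu(\epsilon)$.) *)

theory Defs
  imports "HOL-Analysis.Analysis" "HOL-Probability.Probability"
begin

text \<open>The group G is a type of class group_add (written additively, not necessarily
 commutative), countable and infinite; it carries the discrete topology implicitly.
 act g x is the left action g.x on the compact set X of a metric space (metric = dist).\<close>

definition G_system :: "'x::metric_space set \<Rightarrow> ('g::group_add \<Rightarrow> 'x \<Rightarrow> 'x) \<Rightarrow> bool" where
  "G_system X act \<longleftrightarrow> compact X \<and> X \<noteq> {} \<and>
     (\<forall>x\<in>X. act 0 x = x) \<and>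
     (\<forall>g h. \<forall>x\<in>X. act (g + h) x = act g (act h x)) \<and>
     (\<forall>g. act g ` X \<subseteq> X) \<and>
     (\<forall>g. continuous_on X (act g))"

definition folner :: "(nat \<Rightarrow> 'g::group_add set) \<Rightarrow> bool" where
  "folner F \<longleftrightarrow> (\<forall>n. finite (F n) \<and> F n \<noteq> {}) \<and>
     (\<forall>g. (\<lambda>n. real (card (((+) g ` F n) - F n \<union> (F n - (+) g ` F n))) / real (card (F n)))
            \<longlonglongrightarrow> 0)"

definition tempered :: "(nat \<Rightarrow> 'g::group_add set) \<Rightarrow> bool" where
  "tempered F \<longleftrightarrow> (\<exists>C>0. \<forall>n.
     real (card (\<Union>j<n. {- a + b | a b. a \<in> F j \<and> b \<in> F n})) \<le> C * real (card (F n)))"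

definition PM :: "'x::metric_space set \<Rightarrow> 'x measure set" where
  "PM X = {M. prob_space M \<and> space M = X \<and> sets M = sets (restrict_space borel X)}"

definition invariant_measures :: "'x::metric_space set \<Rightarrow> ('g \<Rightarrow> 'x \<Rightarrow> 'x) \<Rightarrow> 'x measure set" where
  "invariant_measures X act = {M \<in> PM X.
     \<forall>g. \<forall>A\<in>sets M. measure M (act g -` A \<inter> X) = measure M A}"

definition ergodic_measures :: "'x::metric_space set \<Rightarrow> ('g \<Rightarrow> 'x \<Rightarrow> 'x) \<Rightarrow> 'x measure set" where
  "ergodic_measures X act = {M \<in> invariant_measures X act.
     \<forall>A\<in>sets M. (\<forall>g. act g -` A \<inter> X = A) \<longrightarrow> measure M A = 0 \<or> measure M A = 1}"

definition is_ergodic_comb ::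
  "'x::metric_space set \<Rightarrow> ('g \<Rightarrow> 'x \<Rightarrow> 'x) \<Rightarrow> 'x measure \<Rightarrow> 'x measure set \<Rightarrow> ('x measure \<Rightarrow> real) \<Rightarrow> bool" where
  "is_ergodic_comb X act \<mu> E lam \<longleftrightarrow> finite E \<and> E \<noteq> {} \<and> E \<subseteq> ergodic_measures X act \<and>
     (\<forall>\<nu>\<in>E. lam \<nu> > 0) \<and> (\<Sum>\<nu>\<in>E. lam \<nu>) = 1 \<and>
     (\<forall>A\<in>sets \<mu>. measure \<mu> A = (\<Sum>\<nu>\<in>E. lam \<nu> * measure \<nu> A))"

definition co_ergodic :: "'x::metric_space set \<Rightarrow> ('g \<Rightarrow> 'x \<Rightarrow> 'x) \<Rightarrow> 'x measure set" where
  "co_ergodic X act = {\<mu> \<in> PM X. \<exists>E lam. is_ergodic_comb X act \<mu> E lam}"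

definition weak_star :: "'x::metric_space set \<Rightarrow> 'x measure topology" where
  "weak_star X = topology_generated_by
     {{M \<in> PM X. (\<integral>x. f x \<partial>M) \<in> U} | f U. continuous_on X f \<and> open (U :: real set)}"

definition is_partition :: "'x::metric_space set \<Rightarrow> 'x set set \<Rightarrow> bool" where
  "is_partition X \<alpha> \<longleftrightarrow> finite \<alpha> \<and> \<alpha> \<subseteq> sets (restrict_space borel X) \<and>
     disjoint \<alpha> \<and> \<Union>\<alpha> = X"

text \<open>Shannon entropy (natural log; ln 0 = 0 gives 0 log 0 = 0).\<close>
definition part_entropy :: "'x measure \<Rightarrow> 'x set set \<Rightarrow> real" where
  "part_entropy \<nu> \<alpha> = - (\<Sum>A\<in>\<alpha>. measure \<nu> A * ln (measure \<nu> A))"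

definition join_part :: "'x set \<Rightarrow> ('g \<Rightarrow> 'x \<Rightarrow> 'x) \<Rightarrow> 'g set \<Rightarrow> 'x set set \<Rightarrow> 'x set set" where
  "join_part X act F \<alpha> = {(\<Inter>g\<in>F. act g -` c g \<inter> X) \<inter> X | c. \<forall>g\<in>F. c g \<in> \<alpha>} - {{}}"

definition h_part :: "'x set \<Rightarrow> ('g \<Rightarrow> 'x \<Rightarrow> 'x) \<Rightarrow> (nat \<Rightarrow> 'g set) \<Rightarrow> 'x measure \<Rightarrow> 'x set set \<Rightarrow> real" where
  "h_part X act Fs \<nu> \<alpha> = lim (\<lambda>n. part_entropy \<nu> (join_part X act (Fs n) \<alpha>) / real (card (Fs n)))"

definition h_eps :: "'x::metric_space set \<Rightarrow> ('g \<Rightarrow> 'x \<Rightarrow> 'x) \<Rightarrow> (nat \<Rightarrow> 'g set) \<Rightarrow> 'x measure \<Rightarrow> real \<Rightarrow> real" where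
  "h_eps X act Fs \<nu> \<epsilon> = Inf {h_part X act Fs \<nu> \<alpha> | \<alpha>. is_partition X \<alpha> \<and> (\<forall>A\<in>\<alpha>. diameter A \<le> \<epsilon>)}"

text \<open>F(\<mu>,\<epsilon>) for \<mu> in co(E(X,G)), via its unique decomposition.\<close>
definition F_eps :: "'x::metric_space set \<Rightarrow> ('g \<Rightarrow> 'x \<Rightarrow> 'x) \<Rightarrow> (nat \<Rightarrow> 'g set) \<Rightarrow> 'x measure \<Rightarrow> real \<Rightarrow> real" where
  "F_eps X act Fs \<mu> \<epsilon> = (THE s. \<exists>E lam. is_ergodic_comb X act \<mu> E lam \<and>
       s = (\<Sum>\<nu>\<in>E. lam \<nu> * h_eps X act Fs \<nu> \<epsilon>))"

definition MG :: "'x::metric_space set \<Rightarrow> ('g \<Rightarrow> 'x \<Rightarrow> 'x) \<Rightarrow> 'x measure \<Rightarrow> (real \<Rightarrow> 'x measure) set" where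
  "MG X act \<mu> = {m. (\<forall>\<epsilon>>0. m \<epsilon> \<in> co_ergodic X act) \<and> limitin (weak_star X) m \<mu> (at_right 0)}"

definition upper_mdim_M :: "'x::metric_space set \<Rightarrow> ('g \<Rightarrow> 'x \<Rightarrow> 'x) \<Rightarrow> (nat \<Rightarrow> 'g set) \<Rightarrow> 'x measure \<Rightarrow> ereal" where
  "upper_mdim_M X act Fs \<mu> = (SUP m \<in> MG X act \<mu>.
      Limsup (at_right 0) (\<lambda>\<epsilon>. ereal (F_eps X act Fs (m \<epsilon>) \<epsilon> / ln (1 / \<epsilon>))))"

definition lower_mdim_M :: "'x::metric_space set \<Rightarrow> ('g \<Rightarrow> 'x \<Rightarrow> 'x) \<Rightarrow> (nat \<Rightarrow> 'g set) \<Rightarrow> 'x measure \<Rightarrow> ereal" where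
  "lower_mdim_M X act Fs \<mu> = (SUP m \<in> MG X act \<mu>.
      Liminf (at_right 0) (\<lambda>\<epsilon>. ereal (F_eps X act Fs (m \<epsilon>) \<epsilon> / ln (1 / \<epsilon>))))"

definition usc_on :: "'a topology \<Rightarrow> ('a \<Rightarrow> ereal) \<Rightarrow> bool" where
  "usc_on T f \<longleftrightarrow> (\<forall>t. openin T {x \<in> topspace T. f x < t})"

end

theory Submission
  imports Defs "HOL-Library.Countable"
begin

datatype 'r fex = Cst 'r | Dst nat | Addf "'r fex" "'r fex" | Mulf "'r fex" "'r fex"

instance fex :: (countable) countable by countable_datatype

primrec fev :: "('r \<Rightarrow> real) \<Rightarrow> (nat \<Rightarrow> 'x::metric_space) \<Rightarrow> 'r fex \<Rightarrow> 'x \<Rightarrow> real" where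
  "fev h c (Cst r) x = h r"
| "fev h c (Dst n) x = dist x (c n)"
| "fev h c (Addf a b) x = fev h c a x + fev h c b x"
| "fev h c (Mulf a b) x = fev h c a x * fev h c b x"

lemma fev_cont: "continuous_on X (fev h c E)"
  by (induction E) (auto intro!: continuous_intros)

lemma cont_bound:
  fixes f :: "'x::metric_space \<Rightarrow> real"
  assumes "compact X" "continuous_on X f"
  obtains B where "B > 0" "\<And>x. x \<in> X \<Longrightarrow> \<bar>f x\<bar> \<le> B"
proof -
  have "bounded (f ` X)" using compact_continuous_image[OF assms(2,1)] compact_imp_bounded by blast
  then obtain B where "B > 0" "\<forall>y\<in>f ` X. norm y \<le> B" using bounded_pos by metis
  then show ?thesis using that by auto
qed

lemma mult_approx:
  fixes a b a' b' A B d :: real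
  assumes "\<bar>a\<bar> \<le> A" "\<bar>b\<bar> \<le> B" "\<bar>a - a'\<bar> < d" "\<bar>b - b'\<bar> < d" "d \<le> 1"
  shows "\<bar>a * b - a' * b'\<bar> \<le> (A + B + 1) * d"
proof -
  have "a * b - a' * b' = a * (b - b') + b' * (a - a')" by (simp add: algebra_simps)
  hence "\<bar>a * b - a' * b'\<bar> \<le> \<bar>a\<bar> * \<bar>b - b'\<bar> + \<bar>b'\<bar> * \<bar>a - a'\<bar>"
    by (metis abs_mult abs_triangle_ineq)
  also have "\<dots> \<le> A * d + (B + 1) * d"
  proof (rule add_mono)
    show "\<bar>a\<bar> * \<bar>b - b'\<bar> \<le> A * d" using assms by (intro mult_mono) auto
    have "\<bar>b'\<bar> \<le> B + 1" using assms by linarith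
    then show "\<bar>b'\<bar> * \<bar>a - a'\<bar> \<le> (B + 1) * d" using assms by (intro mult_mono) auto
  qed
  finally show ?thesis by (simp add: algebra_simps)
qed

lemma fev_rat_approx:
  fixes X :: "'x::metric_space set"
  assumes "compact X"
  shows "e > 0 \<Longrightarrow> \<exists>Q::rat fex. \<forall>x\<in>X. \<bar>fev id c E x - fev of_rat c Q x\<bar> < e"
proof (induction E arbitrary: e)
  case (Cst r)
  obtain q where "q \<in> \<rat>" "r - e < q" "q < r" using Rats_dense_in_real[of "r - e" r] Cst by auto
  then obtain q' where "q = of_rat q'" by (auto elim: Rats_cases)
  then show ?case using \<open>r - e < q\<close> \<open>q < r\<close> by (intro exI[of _ "Cst q'"]) auto
next
  case (Dst n)
  then show ?case by (intro exI[of _ "Dst n"]) auto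
next
  case (Addf a b)
  obtain Qa where Qa: "\<forall>x\<in>X. \<bar>fev id c a x - fev of_rat c Qa x\<bar> < e/2" using Addf by (meson half_gt_zero)
  obtain Qb where Qb: "\<forall>x\<in>X. \<bar>fev id c b x - fev of_rat c Qb x\<bar> < e/2" using Addf by (meson half_gt_zero)
  show ?case
  proof (intro exI[of _ "Addf Qa Qb"] ballI)
    fix x assume "x \<in> X"
    have "\<bar>fev id c a x - fev of_rat c Qa x\<bar> < e/2" "\<bar>fev id c b x - fev of_rat c Qb x\<bar> < e/2"
      using Qa Qb \<open>x \<in> X\<close> by auto
    moreover have "\<bar>fev id c (Addf a b) x - fev of_rat c (Addf Qa Qb) x\<bar> = \<bar>(fev id c a x - fev of_rat c Qa x) + (fev id c b x - fev of_rat c Qb x)\<bar>"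
      by (simp add: algebra_simps)
    ultimately show "\<bar>fev id c (Addf a b) x - fev of_rat c (Addf Qa Qb) x\<bar> < e"
      using abs_triangle_ineq[of "fev id c a x - fev of_rat c Qa x" "fev id c b x - fev of_rat c Qb x"] by linarith
  qed
next
  case (Mulf a b)
  obtain A where A: "A > 0" "\<And>x. x \<in> X \<Longrightarrow> \<bar>fev id c a x\<bar> \<le> A" using cont_bound[OF assms fev_cont] by metis
  obtain B where B: "B > 0" "\<And>x. x \<in> X \<Longrightarrow> \<bar>fev id c b x\<bar> \<le> B" using cont_bound[OF assms fev_cont] by metis
  define d where "d = min 1 (e / (2 * (A + B + 1)))"
  have d: "d > 0" "d \<le> 1" using A B Mulf.prems by (auto simp: d_def)
  have de: "(A + B + 1) * d < e"
  proof -
    have "(A + B + 1) * d \<le> (A + B + 1) * (e / (2 * (A + B + 1)))"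
      using A B by (intro mult_left_mono) (auto simp: d_def)
    also have "\<dots> = e / 2" using A B by (simp add: field_simps)
    finally show ?thesis using Mulf.prems by linarith
  qed
  obtain Qa where Qa: "\<forall>x\<in>X. \<bar>fev id c a x - fev of_rat c Qa x\<bar> < d" using Mulf d by meson
  obtain Qb where Qb: "\<forall>x\<in>X. \<bar>fev id c b x - fev of_rat c Qb x\<bar> < d" using Mulf d by meson
  show ?case
  proof (intro exI[of _ "Mulf Qa Qb"] ballI)
    fix x assume x: "x \<in> X"
    have "\<bar>fev id c a x * fev id c b x - fev of_rat c Qa x * fev of_rat c Qb x\<bar> \<le> (A + B + 1) * d"
      by (rule mult_approx) (use A B Qa Qb x d in auto)
    then show "\<bar>fev id c (Mulf a b) x - fev of_rat c (Mulf Qa Qb) x\<bar> < e" using de by simp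
  qed
qed

lemma compact_centers:
  fixes X :: "'x::metric_space set"
  assumes "compact X"
  shows "\<exists>c::nat \<Rightarrow> 'x. \<forall>x\<in>X. \<forall>r>0. \<exists>n. dist x (c n) < r"
proof (cases "X = {}")
  case True then show ?thesis by auto
next
  case False
  have "\<forall>n::nat. \<exists>K. finite K \<and> K \<subseteq> X \<and> X \<subseteq> (\<Union>y\<in>K. ball y (1 / (real n + 1)))"
  proof
    fix n :: nat
    have "X \<subseteq> (\<Union>y\<in>X. ball y (1 / (real n + 1)))" by auto
    then obtain K where "K \<subseteq> X" "finite K" "X \<subseteq> (\<Union>y\<in>K. ball y (1 / (real n + 1)))"
      using compactE_image[OF assms, of X "\<lambda>y. ball y (1 / (real n + 1))"] by auto
    then show "\<exists>K. finite K \<and> K \<subseteq> X \<and> X \<subseteq> (\<Union>y\<in>K. ball y (1 / (real n + 1)))" by blast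
  qed
  then obtain K where K: "\<And>n. finite (K n)" "\<And>n. K n \<subseteq> X" "\<And>n. X \<subseteq> (\<Union>y\<in>K n. ball y (1 / (real n + 1)))"
    by metis
  define D where "D = (\<Union>n. K n)"
  have cD: "countable D" unfolding D_def using K(1) by (simp add: countable_finite)
  have "D \<noteq> {}" using K(3)[of 0] False unfolding D_def by auto
  define c where "c = from_nat_into D"
  have rc: "range c = D" unfolding c_def using range_from_nat_into[OF \<open>D \<noteq> {}\<close> cD] .
  show ?thesis
  proof (intro exI[of _ c] ballI allI impI)
    fix x r assume x: "x \<in> X" and r: "(r::real) > 0"
    obtain n :: nat where n: "1 / (real n + 1) < r"
      using reals_Archimedean[OF r] by (metis inverse_eq_divide of_nat_Suc add.commute)
    obtain y where y: "y \<in> K n" "dist y x < 1 / (real n + 1)" using K(3)[of n] x by auto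
    have "y \<in> range c" using y rc unfolding D_def by auto
    then obtain m where "y = c m" by auto
    then show "\<exists>n. dist x (c n) < r" using y n by (metis dist_commute order.strict_trans)
  qed
qed

lemma compact_dense_seq:
  fixes X :: "'x::metric_space set"
  assumes "compact X"
  shows "\<exists>d::nat \<Rightarrow> 'x \<Rightarrow> real. (\<forall>j. continuous_on X (d j)) \<and>
     (\<forall>f. continuous_on X f \<longrightarrow> (\<forall>e>0. \<exists>j. \<forall>x\<in>X. \<bar>f x - d j x\<bar> < e))"
proof -
  obtain c :: "nat \<Rightarrow> 'x" where c: "\<forall>x\<in>X. \<forall>r>0. \<exists>n. dist x (c n) < r"
    using compact_centers[OF assms] by blast
  interpret FR: function_ring_on "range (fev id c)" X
  proof
    show "compact X" by fact
    show "continuous_on X f" if fR: "f \<in> range (fev id c)" for f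
    proof -
      obtain E where "f = fev id c E" using fR by blast
      then show ?thesis using fev_cont by simp
    qed
    show "(\<lambda>x. f x + g x) \<in> range (fev id c)" if fR: "f \<in> range (fev id c)" and gR: "g \<in> range (fev id c)" for f g
    proof -
      obtain a where "f = fev id c a" using fR by blast
      moreover obtain b where "g = fev id c b" using gR by blast
      ultimately
      have "(\<lambda>x. f x + g x) = fev id c (Addf a b)" by auto
      then show ?thesis by (metis rangeI)
    qed
    show "(\<lambda>x. f x * g x) \<in> range (fev id c)" if fR: "f \<in> range (fev id c)" and gR: "g \<in> range (fev id c)" for f g
    proof -
      obtain a where "f = fev id c a" using fR by blast
      moreover obtain b where "g = fev id c b" using gR by blast
      ultimately
      have "(\<lambda>x. f x * g x) = fev id c (Mulf a b)" by auto
      then show ?thesis by (metis rangeI)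
    qed
    show "(\<lambda>_. k) \<in> range (fev id c)" for k
    proof -
      have "(\<lambda>_. k) = fev id c (Cst k)" by auto
      then show ?thesis by (metis rangeI)
    qed
    show "\<exists>f\<in>range (fev id c). f x \<noteq> f y" if xy: "x \<in> X" "y \<in> X" "x \<noteq> y" for x y
    proof -
      have r: "dist x y / 2 > 0" using xy by auto
      obtain n where n: "dist x (c n) < dist x y / 2" using c xy(1) r by blast
      have "dist y (c n) > dist x y / 2" using n dist_triangle[of x y "c n"] by (simp add: dist_commute)
      then have "fev id c (Dst n) x \<noteq> fev id c (Dst n) y" using n by auto
      then show ?thesis by (intro bexI[of _ "fev id c (Dst n)"]) auto
    qed
  qed
  define d where "d = (\<lambda>j. fev of_rat c (from_nat j :: rat fex))"
  show ?thesis
  proof (intro exI[of _ d] conjI allI impI)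
    show "continuous_on X (d j)" for j unfolding d_def by (rule fev_cont)
    fix f :: "'x \<Rightarrow> real" and e :: real assume f: "continuous_on X f" and e: "e > 0"
    have e2: "e / 2 > 0" using e by simp
    obtain g where g: "g \<in> range (fev id c)" "\<forall>x\<in>X. \<bar>f x - g x\<bar> < e / 2"
      using FR.Stone_Weierstrass_basic[OF f e2] by blast
    obtain E where E: "g = fev id c E" using g(1) by blast
    obtain Q where Q: "\<forall>x\<in>X. \<bar>fev id c E x - fev of_rat c Q x\<bar> < e / 2"
      using fev_rat_approx[OF assms e2, of c E] by blast
    have "d (to_nat Q) = fev of_rat c Q" unfolding d_def by simp
    have "\<forall>x\<in>X. \<bar>f x - d (to_nat Q) x\<bar> < e"
    proof
      fix x assume x: "x \<in> X"
      have "\<bar>f x - g x\<bar> < e/2" "\<bar>g x - d (to_nat Q) x\<bar> < e/2" using g(2) Q E x \<open>d (to_nat Q) = _\<close> by auto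
      then show "\<bar>f x - d (to_nat Q) x\<bar> < e" by linarith
    qed
    then show "\<exists>j. \<forall>x\<in>X. \<bar>f x - d j x\<bar> < e" by blast
  qed
qed

lemma PM_integrable:
  fixes X :: "'x::metric_space set"
  assumes M: "M \<in> PM X" and X: "compact X" and f: "continuous_on X (f :: 'x \<Rightarrow> real)"
  shows "integrable M f"
proof -
  interpret prob_space M using M by (simp add: PM_def)
  have sp: "space M = X" "sets M = sets (restrict_space borel X)" using M by (auto simp: PM_def)
  have meas: "f \<in> borel_measurable M"
    using borel_measurable_continuous_on_restrict[OF f] measurable_cong_sets[where N="borel :: real measure" and N'="borel :: real measure", OF sp(2) refl] by (simp only:)
  have "bounded (f ` X)" using compact_continuous_image[OF f X] compact_imp_bounded by blast
  then obtain B where "\<forall>y\<in>f ` X. norm y \<le> B" using bounded_pos by metis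
  then have "AE x in M. norm (f x) \<le> B" using sp by (intro AE_I2) auto
  then show ?thesis using meas integrable_const_bound by blast
qed

lemma PM_int_diff:
  fixes X :: "'x::metric_space set"
  assumes M: "M \<in> PM X" and X: "compact X" and f: "continuous_on X (f :: 'x \<Rightarrow> real)"
    and g: "continuous_on X g" and fg: "\<And>x. x \<in> X \<Longrightarrow> \<bar>f x - g x\<bar> \<le> e"
  shows "\<bar>(\<integral>x. f x \<partial>M) - (\<integral>x. g x \<partial>M)\<bar> \<le> e"
proof -
  interpret prob_space M using M by (simp add: PM_def)
  have sp: "space M = X" using M by (auto simp: PM_def)
  have i: "integrable M f" "integrable M g" using PM_integrable assms by blast+
  have "(\<integral>x. f x \<partial>M) - (\<integral>x. g x \<partial>M) = (\<integral>x. f x - g x \<partial>M)" using i by simp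
  also have "\<bar>\<dots>\<bar> \<le> (\<integral>x. \<bar>f x - g x\<bar> \<partial>M)" by (rule integral_abs_bound)
  also have "\<dots> \<le> (\<integral>x. e \<partial>M)"
    using i fg sp by (intro integral_mono) auto
  also have "\<dots> = e" by (simp add: prob_space)
  finally show ?thesis .
qed

lemma weak_star_topspace: "topspace (weak_star X) = PM X"
proof -
  have "PM X \<in> {{M \<in> PM X. (\<integral>x. f x \<partial>M) \<in> U} | f U. continuous_on X f \<and> open (U :: real set)}"
    by (intro CollectI exI[of _ "\<lambda>_. 0"] exI[of _ UNIV]) auto
  moreover have "\<Union>{{M \<in> PM X. (\<integral>x. f x \<partial>M) \<in> U} | f U. continuous_on X f \<and> open (U :: real set)} \<subseteq> PM X"
    by (rule Union_least) blast
  ultimately show ?thesis unfolding weak_star_def topology_generated_by_topspace by blast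
qed

lemma weak_star_basic_open:
  assumes "continuous_on X f" "open (U::real set)"
  shows "openin (weak_star X) {M \<in> PM X. (\<integral>x. f x \<partial>M) \<in> U}"
  unfolding weak_star_def openin_topology_generated_by_iff
  apply (rule generate_topology_on.Basis)
  apply (rule CollectI, rule exI[of _ f], rule exI[of _ U])
  using assms by simp

lemma openin_finite_conj:
  assumes "finite J" "\<And>j. j \<in> J \<Longrightarrow> openin T {x \<in> topspace T. P j x}"
  shows "openin T {x \<in> topspace T. \<forall>j\<in>J. P j x}"
  using assms
proof (induction J rule: finite_induct)
  case empty then show ?case by simp
next
  case (insert a J)
  have "{x \<in> topspace T. \<forall>j\<in>insert a J. P j x} = {x \<in> topspace T. P a x} \<inter> {x \<in> topspace T. \<forall>j\<in>J. P j x}"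
    by auto
  moreover have "openin T {x \<in> topspace T. P a x}" using insert.prems by simp
  moreover have "openin T {x \<in> topspace T. \<forall>j\<in>J. P j x}" using insert.IH insert.prems by simp
  ultimately show ?case by (simp add: openin_Int)
qed

lemma weak_star_countable_base:
  fixes X :: "'x::metric_space set"
  assumes X: "compact X" and mu: "\<mu>0 \<in> PM X"
  shows "\<exists>U::nat \<Rightarrow> 'x measure set. (\<forall>k. openin (weak_star X) (U k) \<and> \<mu>0 \<in> U k) \<and>
     (\<forall>k l. k \<le> l \<longrightarrow> U l \<subseteq> U k) \<and> (\<forall>V. openin (weak_star X) V \<and> \<mu>0 \<in> V \<longrightarrow> (\<exists>k. U k \<subseteq> V))"
proof -
  obtain d :: "nat \<Rightarrow> 'x \<Rightarrow> real" where dc: "\<And>j. continuous_on X (d j)"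
    and dd: "\<And>f e. continuous_on X f \<Longrightarrow> e > 0 \<Longrightarrow> \<exists>j. \<forall>x\<in>X. \<bar>f x - d j x\<bar> < e"
    using compact_dense_seq[OF X] by metis
  define U where "U = (\<lambda>k. {M \<in> PM X. \<forall>j\<in>{..<k}. (\<integral>x. d j x \<partial>M) \<in> ball (\<integral>x. d j x \<partial>\<mu>0) (1 / real (Suc k))})"
  have Uo: "openin (weak_star X) (U k)" for k
  proof -
    have "openin (weak_star X) {M \<in> topspace (weak_star X). \<forall>j\<in>{..<k}. (\<integral>x. d j x \<partial>M) \<in> ball (\<integral>x. d j x \<partial>\<mu>0) (1 / real (Suc k))}"
    proof (rule openin_finite_conj)
      fix j
      show "openin (weak_star X) {M \<in> topspace (weak_star X). (\<integral>x. d j x \<partial>M) \<in> ball (\<integral>x. d j x \<partial>\<mu>0) (1 / real (Suc k))}"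
        unfolding weak_star_topspace by (rule weak_star_basic_open[OF dc]) simp
    qed simp
    then show ?thesis unfolding U_def weak_star_topspace .
  qed
  have Umu: "\<mu>0 \<in> U k" for k using mu by (simp add: U_def)
  have Umono: "U l \<subseteq> U k" if kl: "k \<le> l" for k l
  proof
    fix M assume Ml: "M \<in> U l"
    have le: "1 / real (Suc l) \<le> 1 / real (Suc k)" using kl by (simp add: frac_le)
    have MP: "M \<in> PM X" using Ml by (simp add: U_def)
    have "\<forall>j\<in>{..<k}. (\<integral>x. d j x \<partial>M) \<in> ball (\<integral>x. d j x \<partial>\<mu>0) (1 / real (Suc k))"
    proof
      fix j assume "j \<in> {..<k}"
      then have "j \<in> {..<l}" using kl by auto
      then have "(\<integral>x. d j x \<partial>M) \<in> ball (\<integral>x. d j x \<partial>\<mu>0) (1 / real (Suc l))"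
        using Ml unfolding U_def by blast
      then show "(\<integral>x. d j x \<partial>M) \<in> ball (\<integral>x. d j x \<partial>\<mu>0) (1 / real (Suc k))"
        using le by (meson mem_ball order_less_le_trans)
    qed
    then show "M \<in> U k" using MP unfolding U_def by blast
  qed
  have base: "generate_topology_on {{M \<in> PM X. (\<integral>x. f x \<partial>M) \<in> U} | f U. continuous_on X f \<and> open (U :: real set)} V
      \<Longrightarrow> \<mu>0 \<in> V \<Longrightarrow> \<exists>k. U k \<subseteq> V" for V
  proof (induction rule: generate_topology_on.induct)
    case Empty then show ?case by simp
  next
    case (Int a b)
    then obtain k1 k2 where "U k1 \<subseteq> a" "U k2 \<subseteq> b" by auto
    then have "U (max k1 k2) \<subseteq> a \<inter> b" using Umono[of k1 "max k1 k2"] Umono[of k2 "max k1 k2"] by auto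
    then show ?case by blast
  next
    case (UN K)
    then obtain k where "k \<in> K" "\<mu>0 \<in> k" by auto
    then show ?case using UN.IH by blast
  next
    case (Basis s)
    from Basis.hyps have "\<exists>(f::'x \<Rightarrow> real) Ou. s = {M \<in> PM X. (\<integral>x. f x \<partial>M) \<in> Ou} \<and> continuous_on X f \<and> open (Ou :: real set)"
      by (simp only: mem_Collect_eq)
    then obtain f :: "'x \<Rightarrow> real" and Ou :: "real set" where s: "s = {M \<in> PM X. (\<integral>x. f x \<partial>M) \<in> Ou}" and f: "continuous_on X f" and Ou: "open Ou"
      by blast
    have "(\<integral>x. f x \<partial>\<mu>0) \<in> Ou" using Basis.prems s by auto
    then obtain e where e: "e > 0" "ball (\<integral>x. f x \<partial>\<mu>0) e \<subseteq> Ou" using Ou open_contains_ball by blast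
    obtain j where j: "\<forall>x\<in>X. \<bar>f x - d j x\<bar> < e / 3" using dd[OF f, of "e/3"] e by auto
    obtain N :: nat where N: "1 / real (Suc N) < e / 3"
    proof -
      have "e / 3 > 0" using e by simp
      from reals_Archimedean[OF this] obtain n where "inverse (real (Suc n)) < e / 3" by blast
      then show ?thesis using that by (simp add: inverse_eq_divide)
    qed
    define k where "k = N + Suc j"
    have jk: "j < k" by (simp add: k_def)
    have Nk: "1 / real (Suc k) \<le> 1 / real (Suc N)" by (simp add: k_def frac_le)
    have "U k \<subseteq> s"
    proof
      fix M assume M: "M \<in> U k"
      then have MP: "M \<in> PM X" by (simp add: U_def)
      have "(\<integral>x. d j x \<partial>M) \<in> ball (\<integral>x. d j x \<partial>\<mu>0) (1 / real (Suc k))"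
        using M jk unfolding U_def by blast
      then have "dist (\<integral>x. d j x \<partial>\<mu>0) (\<integral>x. d j x \<partial>M) < e / 3" using Nk N by simp
      then have a: "\<bar>(\<integral>x. d j x \<partial>M) - (\<integral>x. d j x \<partial>\<mu>0)\<bar> < e / 3"
        by (simp add: dist_real_def abs_minus_commute)
      have jj: "\<And>x. x \<in> X \<Longrightarrow> \<bar>f x - d j x\<bar> \<le> e / 3" using j by (simp add: less_imp_le)
      have b: "\<bar>(\<integral>x. f x \<partial>M) - (\<integral>x. d j x \<partial>M)\<bar> \<le> e / 3"
        by (rule PM_int_diff[OF MP X f dc jj])
      have c: "\<bar>(\<integral>x. f x \<partial>\<mu>0) - (\<integral>x. d j x \<partial>\<mu>0)\<bar> \<le> e / 3"
        by (rule PM_int_diff[OF mu X f dc jj])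
      have "\<bar>(\<integral>x. f x \<partial>M) - (\<integral>x. f x \<partial>\<mu>0)\<bar> < e" using a b c by linarith
      then have "(\<integral>x. f x \<partial>M) \<in> Ou" using e by (auto simp: dist_real_def subset_iff)
      then show "M \<in> s" using s MP by simp
    qed
    then show ?case by blast
  qed
  show ?thesis
  proof (intro exI[of _ U] conjI allI impI Uo Umu Umono)
    fix V assume V: "openin (weak_star X) V \<and> \<mu>0 \<in> V"
    then have "generate_topology_on {{M \<in> PM X. (\<integral>x. f x \<partial>M) \<in> U} | f U. continuous_on X f \<and> open (U :: real set)} V"
      unfolding weak_star_def openin_topology_generated_by_iff by (elim conjE)
    then show "\<exists>k. U k \<subseteq> V" using base V by blast
  qed
qed

lemma piece_index:
  fixes P R :: "nat \<Rightarrow> real \<Rightarrow> bool"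
  assumes ev: "\<And>k. eventually (P k) (at_right 0)"
    and fr: "\<And>k. frequently (R k) (at_right 0)"
  shows "\<exists>idx :: real \<Rightarrow> nat. (\<forall>k. eventually (\<lambda>\<epsilon>. k \<le> idx \<epsilon> \<and> P (idx \<epsilon>) \<epsilon>) (at_right 0)) \<and>
           frequently (\<lambda>\<epsilon>. R (idx \<epsilon>) \<epsilon>) (at_right 0)"
proof -
  have "\<forall>k. \<exists>\<eta>>0. \<forall>\<epsilon>>0. \<epsilon> < \<eta> \<longrightarrow> P k \<epsilon>" using ev by (simp add: eventually_at_right_field)
  then obtain \<eta> where \<eta>: "\<And>k. \<eta> k > 0" "\<And>k \<epsilon>. 0 < \<epsilon> \<Longrightarrow> \<epsilon> < \<eta> k \<Longrightarrow> P k \<epsilon>" by metis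
  have frx: "\<exists>\<epsilon>. 0 < \<epsilon> \<and> \<epsilon> < \<delta> \<and> R k \<epsilon>" if dpos: "\<delta> > 0" for k \<delta>
  proof (rule ccontr)
    assume "\<not> (\<exists>\<epsilon>. 0 < \<epsilon> \<and> \<epsilon> < \<delta> \<and> R k \<epsilon>)"
    then have "eventually (\<lambda>\<epsilon>. \<not> R k \<epsilon>) (at_right 0)"
      unfolding eventually_at_right_field using dpos by auto
    then show False using fr[of k] by (simp add: frequently_def)
  qed
  define W where "W k \<delta> = (SOME \<epsilon>. 0 < \<epsilon> \<and> \<epsilon> < \<delta> \<and> R k \<epsilon>)" for k \<delta>
  have W: "0 < W k \<delta> \<and> W k \<delta> < \<delta> \<and> R k (W k \<delta>)" if "\<delta> > 0" for k \<delta>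
    using someI_ex[OF frx[OF that, of k]] unfolding W_def .
  define b where "b = rec_nat (\<eta> 0 / 2) (\<lambda>k bk. min (\<eta> (Suc k) / 2) (min (W k bk / 2) (1 / (real k + 2))))"
  have b0: "b 0 = \<eta> 0 / 2" by (simp add: b_def)
  have bS: "b (Suc k) = min (\<eta> (Suc k) / 2) (min (W k (b k) / 2) (1 / (real k + 2)))" for k
    by (simp add: b_def)
  have bpos: "b k > 0" for k
  proof (induction k)
    case 0 then show ?case using \<eta>(1)[of 0] b0 by simp
  next
    case (Suc k)
    then have "W k (b k) > 0" using W by blast
    then show ?case using \<eta>(1)[of "Suc k"] bS[of k] by simp
  qed
  have b\<eta>: "b k < \<eta> k" for k
  proof (cases k)
    case 0 then show ?thesis using \<eta>(1)[of 0] b0 by simp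
  next
    case (Suc j) then show ?thesis using \<eta>(1)[of k] bS[of j] by simp
  qed
  have bW: "b (Suc k) < W k (b k)" "W k (b k) < b k" "R k (W k (b k))" for k
  proof -
    have w: "0 < W k (b k)" "W k (b k) < b k" "R k (W k (b k))" using W[OF bpos[of k], of k] by auto
    then show "b (Suc k) < W k (b k)" using bS[of k] by simp
    show "W k (b k) < b k" "R k (W k (b k))" using w by auto
  qed
  have "decseq b"
    by (rule decseq_SucI) (use bW in \<open>meson less_imp_le order.strict_trans\<close>)
  then have bdec: "b j \<le> b i" if "i \<le> j" for i j using that decseqD by blast
  have ex: "\<exists>k. b (Suc k) < \<epsilon>" if epos: "\<epsilon> > 0" for \<epsilon>
  proof -
    from reals_Archimedean[OF epos] obtain n where n: "inverse (real (Suc n)) < \<epsilon>" by blast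
    have "b (Suc n) \<le> 1 / (real n + 2)" using bS[of n] by simp
    also have "\<dots> \<le> inverse (real (Suc n))" by (simp add: inverse_eq_divide frac_le)
    finally show ?thesis using n by (meson le_less_trans)
  qed
  define idx where "idx \<epsilon> = (LEAST k. b (Suc k) < \<epsilon>)" for \<epsilon>
  have idx1: "b (Suc (idx \<epsilon>)) < \<epsilon>" if "\<epsilon> > 0" for \<epsilon>
    unfolding idx_def by (rule LeastI_ex[OF ex[OF that]])
  have idx2: "idx \<epsilon> \<le> k" if "b (Suc k) < \<epsilon>" for \<epsilon> k
    unfolding idx_def by (rule Least_le) (rule that)
  have idx3: "k \<le> idx \<epsilon>" if "0 < \<epsilon>" "\<epsilon> < b k" for \<epsilon> k
  proof (rule ccontr)
    assume "\<not> k \<le> idx \<epsilon>"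
    then have "Suc (idx \<epsilon>) \<le> k" by simp
    then have "b k \<le> b (Suc (idx \<epsilon>))" by (rule bdec)
    with idx1[OF that(1)] that(2) show False by linarith
  qed
  have idx4: "\<epsilon> \<le> b (idx \<epsilon>)" if "0 < \<epsilon>" "\<epsilon> \<le> b 0" for \<epsilon>
  proof (cases "idx \<epsilon>")
    case 0 then show ?thesis using that by simp
  next
    case (Suc j)
    have "j < idx \<epsilon>" using Suc by simp
    then have "\<not> b (Suc j) < \<epsilon>" unfolding idx_def by (rule not_less_Least)
    then show ?thesis using Suc by simp
  qed
  show ?thesis
  proof (intro exI[of _ idx] conjI allI)
    fix k
    show "eventually (\<lambda>\<epsilon>. k \<le> idx \<epsilon> \<and> P (idx \<epsilon>) \<epsilon>) (at_right 0)"
      unfolding eventually_at_right_field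
    proof (rule exI[of _ "b k"], intro conjI[OF bpos] allI impI)
      fix \<epsilon> :: real assume e: "0 < \<epsilon>" "\<epsilon> < b k"
      then have k: "k \<le> idx \<epsilon>" by (rule idx3)
      have "\<epsilon> \<le> b 0" using bdec[of 0 k] e by simp
      then have "\<epsilon> \<le> b (idx \<epsilon>)" using idx4 e by simp
      then have "\<epsilon> < \<eta> (idx \<epsilon>)" using b\<eta>[of "idx \<epsilon>"] by linarith
      then show "k \<le> idx \<epsilon> \<and> P (idx \<epsilon>) \<epsilon>" using k \<eta>(2) e by blast
    qed
  next
    show "frequently (\<lambda>\<epsilon>. R (idx \<epsilon>) \<epsilon>) (at_right 0)"
      unfolding frequently_def eventually_at_right_field
    proof
      assume "\<exists>\<delta>>0. \<forall>\<epsilon>>0. \<epsilon> < \<delta> \<longrightarrow> \<not> R (idx \<epsilon>) \<epsilon>"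
      then obtain \<delta> :: real where \<delta>: "\<delta> > 0" "\<And>\<epsilon>. 0 < \<epsilon> \<Longrightarrow> \<epsilon> < \<delta> \<Longrightarrow> \<not> R (idx \<epsilon>) \<epsilon>" by blast
      obtain k0 where k0: "b (Suc k0) < \<delta>" using ex[OF \<delta>(1)] by blast
      define k where "k = Suc k0"
      define w where "w = W k (b k)"
      have w: "0 < w" "w < b k" "R k w" "b (Suc k) < w"
        using W[OF bpos[of k], of k] bW[of k] unfolding w_def by auto
      have "idx w = k" using idx2[OF w(4)] idx3[OF w(1,2)] by simp
      then have "R (idx w) w" using w by simp
      moreover have "w < \<delta>" using w(2) k0 unfolding k_def by simp
      ultimately show False using \<delta>(2) w(1) by blast
    qed
  qed
qed

lemma usc_generic:
  fixes T :: "'a topology" and S C :: "'a set" and \<Phi> :: "(real \<Rightarrow> 'a) \<Rightarrow> ereal"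
  assumes S: "S \<subseteq> topspace T"
    and base: "\<And>\<mu>. \<mu> \<in> S \<Longrightarrow> \<exists>U::nat \<Rightarrow> 'a set. (\<forall>k. openin T (U k) \<and> \<mu> \<in> U k) \<and>
        (\<forall>k l. k \<le> l \<longrightarrow> U l \<subseteq> U k) \<and> (\<forall>V. openin T V \<and> \<mu> \<in> V \<longrightarrow> (\<exists>k. U k \<subseteq> V))"
    and glue: "\<And>(ms :: nat \<Rightarrow> real \<Rightarrow> 'a) (U :: nat \<Rightarrow> 'a set) (s::real).
        (\<And>k. \<Phi> (ms k) > ereal s) \<Longrightarrow> (\<And>k. eventually (\<lambda>\<epsilon>. ms k \<epsilon> \<in> U k) (at_right 0)) \<Longrightarrow>
        \<exists>idx :: real \<Rightarrow> nat. (\<forall>k. eventually (\<lambda>\<epsilon>. k \<le> idx \<epsilon> \<and> ms (idx \<epsilon>) \<epsilon> \<in> U (idx \<epsilon>)) (at_right 0)) \<and>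
           \<Phi> (\<lambda>\<epsilon>. ms (idx \<epsilon>) \<epsilon>) \<ge> ereal s"
  shows "usc_on (subtopology T S) (\<lambda>\<mu>. SUP m \<in> {m. (\<forall>\<epsilon>>0. m \<epsilon> \<in> C) \<and> limitin T m \<mu> (at_right 0)}. \<Phi> m)"
proof -
  define f where "f \<mu> = (SUP m \<in> {m. (\<forall>\<epsilon>>0. m \<epsilon> \<in> C) \<and> limitin T m \<mu> (at_right 0)}. \<Phi> m)" for \<mu>
  have tsp: "topspace (subtopology T S) = S" using S by auto
  have "openin (subtopology T S) {x \<in> topspace (subtopology T S). f x < t}" for t
  proof (subst openin_subopen, intro ballI)
    fix \<mu>0 assume "\<mu>0 \<in> {x \<in> topspace (subtopology T S). f x < t}"
    then have \<mu>0: "\<mu>0 \<in> S" "f \<mu>0 < t" using tsp by auto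
    obtain s where s: "f \<mu>0 < ereal s" "ereal s < t" using ereal_dense2[OF \<mu>0(2)] by blast
    obtain U :: "nat \<Rightarrow> 'a set" where Uo: "\<And>k. openin T (U k)" "\<And>k. \<mu>0 \<in> U k"
      and Um: "\<And>k l. k \<le> l \<Longrightarrow> U l \<subseteq> U k" and Ub: "\<And>V. openin T V \<Longrightarrow> \<mu>0 \<in> V \<Longrightarrow> \<exists>k. U k \<subseteq> V"
      using base[OF \<mu>0(1)] by metis
    have "\<exists>k. \<forall>\<mu>\<in>U k \<inter> S. f \<mu> < t"
    proof (rule ccontr)
      assume "\<not> (\<exists>k. \<forall>\<mu>\<in>U k \<inter> S. f \<mu> < t)"
      then have "\<forall>k. \<exists>\<mu>. \<mu> \<in> U k \<and> \<mu> \<in> S \<and> t \<le> f \<mu>" by (auto simp: not_less)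
      then obtain \<mu>s where \<mu>s: "\<And>k. \<mu>s k \<in> U k" "\<And>k. \<mu>s k \<in> S" "\<And>k. t \<le> f (\<mu>s k)" by metis
      have "\<forall>k. \<exists>m. (\<forall>\<epsilon>>0. m \<epsilon> \<in> C) \<and> limitin T m (\<mu>s k) (at_right 0) \<and> ereal s < \<Phi> m"
      proof
        fix k
        have "ereal s < f (\<mu>s k)" using s(2) \<mu>s(3)[of k] by (rule less_le_trans)
        then show "\<exists>m. (\<forall>\<epsilon>>0. m \<epsilon> \<in> C) \<and> limitin T m (\<mu>s k) (at_right 0) \<and> ereal s < \<Phi> m"
          unfolding f_def less_SUP_iff by blast
      qed
      then obtain ms where msC: "\<And>k \<epsilon>. \<epsilon> > 0 \<Longrightarrow> ms k \<epsilon> \<in> C"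
        and msl: "\<And>k. limitin T (ms k) (\<mu>s k) (at_right 0)" and ms\<Phi>: "\<And>k. ereal s < \<Phi> (ms k)"
        by metis
      have msU: "eventually (\<lambda>\<epsilon>. ms k \<epsilon> \<in> U k) (at_right 0)" for k
        using msl[of k] Uo[of k] \<mu>s(1)[of k] unfolding limitin_def by blast
      obtain idx where idx: "\<And>k. eventually (\<lambda>\<epsilon>. k \<le> idx \<epsilon> \<and> ms (idx \<epsilon>) \<epsilon> \<in> U (idx \<epsilon>)) (at_right 0)"
        and idx\<Phi>: "\<Phi> (\<lambda>\<epsilon>. ms (idx \<epsilon>) \<epsilon>) \<ge> ereal s"
        using glue[where ms=ms and U=U and s=s, OF ms\<Phi> msU] by blast
      define m where "m \<epsilon> = ms (idx \<epsilon>) \<epsilon>" for \<epsilon>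
      have mC: "\<forall>\<epsilon>>0. m \<epsilon> \<in> C" using msC unfolding m_def by blast
      have ml: "limitin T m \<mu>0 (at_right 0)"
        unfolding limitin_def
      proof (intro conjI allI impI)
        show "\<mu>0 \<in> topspace T" using S \<mu>0(1) by blast
        fix V assume "openin T V \<and> \<mu>0 \<in> V"
        then obtain k where k: "U k \<subseteq> V" using Ub by blast
        show "eventually (\<lambda>\<epsilon>. m \<epsilon> \<in> V) (at_right 0)"
          using idx[of k]
        proof (rule eventually_mono)
          fix \<epsilon> assume "k \<le> idx \<epsilon> \<and> ms (idx \<epsilon>) \<epsilon> \<in> U (idx \<epsilon>)"
          then show "m \<epsilon> \<in> V" using Um[of k "idx \<epsilon>"] k unfolding m_def by blast
        qed
      qed
      have "\<Phi> m \<le> f \<mu>0" unfolding f_def by (rule SUP_upper) (use mC ml in blast)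
      moreover have "ereal s \<le> \<Phi> m" using idx\<Phi> unfolding m_def .
      ultimately show False using s(1) by simp
    qed
    then obtain k where k: "\<forall>\<mu>\<in>U k \<inter> S. f \<mu> < t" by blast
    show "\<exists>V. openin (subtopology T S) V \<and> \<mu>0 \<in> V \<and> V \<subseteq> {x \<in> topspace (subtopology T S). f x < t}"
    proof (intro exI[of _ "U k \<inter> S"] conjI)
      show "openin (subtopology T S) (U k \<inter> S)" using Uo(1)[of k] by (auto simp: openin_subtopology)
      show "\<mu>0 \<in> U k \<inter> S" using Uo(2) \<mu>0(1) by blast
      show "U k \<inter> S \<subseteq> {x \<in> topspace (subtopology T S). f x < t}" using k tsp by auto
    qed
  qed
  then show ?thesis unfolding usc_on_def f_def by blast
qed

lemma glue_limsup:
  fixes G :: "'a \<Rightarrow> real \<Rightarrow> ereal" and ms :: "nat \<Rightarrow> real \<Rightarrow> 'a" and U :: "nat \<Rightarrow> 'a set"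
  assumes gt: "\<And>k. Limsup (at_right 0) (\<lambda>\<epsilon>. G (ms k \<epsilon>) \<epsilon>) > ereal s"
    and ev: "\<And>k. eventually (\<lambda>\<epsilon>. ms k \<epsilon> \<in> U k) (at_right 0)"
  shows "\<exists>idx :: real \<Rightarrow> nat. (\<forall>k. eventually (\<lambda>\<epsilon>. k \<le> idx \<epsilon> \<and> ms (idx \<epsilon>) \<epsilon> \<in> U (idx \<epsilon>)) (at_right 0)) \<and>
           Limsup (at_right 0) (\<lambda>\<epsilon>. G (ms (idx \<epsilon>) \<epsilon>) \<epsilon>) \<ge> ereal s"
proof -
  have fr: "frequently (\<lambda>\<epsilon>. G (ms k \<epsilon>) \<epsilon> > ereal s) (at_right 0)" for k
  proof (rule ccontr)
    assume "\<not> frequently (\<lambda>\<epsilon>. G (ms k \<epsilon>) \<epsilon> > ereal s) (at_right 0)"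
    then have "eventually (\<lambda>\<epsilon>. G (ms k \<epsilon>) \<epsilon> \<le> ereal s) (at_right 0)"
      by (simp add: not_frequently not_less)
    then have "Limsup (at_right 0) (\<lambda>\<epsilon>. G (ms k \<epsilon>) \<epsilon>) \<le> ereal s" by (rule Limsup_bounded)
    then show False using gt[of k] by simp
  qed
  obtain idx where idx: "\<forall>k. eventually (\<lambda>\<epsilon>. k \<le> idx \<epsilon> \<and> ms (idx \<epsilon>) \<epsilon> \<in> U (idx \<epsilon>)) (at_right 0)"
    and fri: "frequently (\<lambda>\<epsilon>. G (ms (idx \<epsilon>) \<epsilon>) \<epsilon> > ereal s) (at_right 0)"
    using piece_index[where P="\<lambda>k \<epsilon>. ms k \<epsilon> \<in> U k" and R="\<lambda>k \<epsilon>. G (ms k \<epsilon>) \<epsilon> > ereal s", OF ev fr]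
    by blast
  have "Limsup (at_right 0) (\<lambda>\<epsilon>. G (ms (idx \<epsilon>) \<epsilon>) \<epsilon>) \<ge> ereal s"
  proof (rule ccontr)
    assume "\<not> ?thesis"
    then have "Limsup (at_right 0) (\<lambda>\<epsilon>. G (ms (idx \<epsilon>) \<epsilon>) \<epsilon>) < ereal s" by simp
    then have "eventually (\<lambda>\<epsilon>. G (ms (idx \<epsilon>) \<epsilon>) \<epsilon> < ereal s) (at_right 0)" by (rule Limsup_lessD)
    from frequently_eventually_frequently[OF fri this]
    have "frequently (\<lambda>\<epsilon>. False) (at_right (0::real))" by (rule frequently_elim1) auto
    then show False by simp
  qed
  then show ?thesis using idx by blast
qed

lemma glue_liminf:
  fixes G :: "'a \<Rightarrow> real \<Rightarrow> ereal" and ms :: "nat \<Rightarrow> real \<Rightarrow> 'a" and U :: "nat \<Rightarrow> 'a set"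
  assumes gt: "\<And>k. Liminf (at_right 0) (\<lambda>\<epsilon>. G (ms k \<epsilon>) \<epsilon>) > ereal s"
    and ev: "\<And>k. eventually (\<lambda>\<epsilon>. ms k \<epsilon> \<in> U k) (at_right 0)"
  shows "\<exists>idx :: real \<Rightarrow> nat. (\<forall>k. eventually (\<lambda>\<epsilon>. k \<le> idx \<epsilon> \<and> ms (idx \<epsilon>) \<epsilon> \<in> U (idx \<epsilon>)) (at_right 0)) \<and>
           Liminf (at_right 0) (\<lambda>\<epsilon>. G (ms (idx \<epsilon>) \<epsilon>) \<epsilon>) \<ge> ereal s"
proof -
  have ev2: "eventually (\<lambda>\<epsilon>. ms k \<epsilon> \<in> U k \<and> G (ms k \<epsilon>) \<epsilon> > ereal s) (at_right 0)" for k
    using ev[of k] less_LiminfD[OF gt[of k]] by (rule eventually_conj)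
  have fr: "frequently (\<lambda>\<epsilon>. True) (at_right (0::real))" for k :: nat by simp
  obtain idx where idx: "\<forall>k. eventually (\<lambda>\<epsilon>. k \<le> idx \<epsilon> \<and> (ms (idx \<epsilon>) \<epsilon> \<in> U (idx \<epsilon>) \<and> G (ms (idx \<epsilon>) \<epsilon>) \<epsilon> > ereal s)) (at_right 0)"
    using piece_index[where P="\<lambda>k \<epsilon>. ms k \<epsilon> \<in> U k \<and> G (ms k \<epsilon>) \<epsilon> > ereal s" and R="\<lambda>k \<epsilon>. True", OF ev2 fr]
    by blast
  have "eventually (\<lambda>\<epsilon>. ereal s \<le> G (ms (idx \<epsilon>) \<epsilon>) \<epsilon>) (at_right 0)"
    using idx[rule_format, of 0] by (rule eventually_mono) auto
  then have "Liminf (at_right 0) (\<lambda>\<epsilon>. G (ms (idx \<epsilon>) \<epsilon>) \<epsilon>) \<ge> ereal s" by (rule Liminf_bounded)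
  moreover have "\<forall>k. eventually (\<lambda>\<epsilon>. k \<le> idx \<epsilon> \<and> ms (idx \<epsilon>) \<epsilon> \<in> U (idx \<epsilon>)) (at_right 0)"
    using idx by (auto elim: eventually_mono)
  ultimately show ?thesis by blast
qed

theorem proposition3p26:
  fixes X :: "'x::metric_space set"
    and act :: "'g::{group_add, countable} \<Rightarrow> 'x \<Rightarrow> 'x"
    and Fs :: "nat \<Rightarrow> 'g set"
  assumes "infinite (UNIV :: 'g set)"
    and "G_system X act"
    and "folner Fs"
    and "tempered Fs"
  shows "usc_on (subtopology (weak_star X) (invariant_measures X act)) (upper_mdim_M X act Fs) \<and>
         usc_on (subtopology (weak_star X) (invariant_measures X act)) (lower_mdim_M X act Fs)"
proof -
  have X: "compact X" using assms(2) by (simp add: G_system_def)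
  have invPM: "invariant_measures X act \<subseteq> PM X" by (auto simp: invariant_measures_def)
  have S: "invariant_measures X act \<subseteq> topspace (weak_star X)" using invPM by (simp add: weak_star_topspace)
  have base: "\<exists>U::nat \<Rightarrow> 'x measure set. (\<forall>k. openin (weak_star X) (U k) \<and> \<mu> \<in> U k) \<and>
        (\<forall>k l. k \<le> l \<longrightarrow> U l \<subseteq> U k) \<and> (\<forall>V. openin (weak_star X) V \<and> \<mu> \<in> V \<longrightarrow> (\<exists>k. U k \<subseteq> V))"
    if "\<mu> \<in> invariant_measures X act" for \<mu>
    using weak_star_countable_base[OF X] that invPM by blast
  define G where "G \<mu> \<epsilon> = ereal (F_eps X act Fs \<mu> \<epsilon> / ln (1 / \<epsilon>))" for \<mu> \<epsilon>
  have up: "upper_mdim_M X act Fs = (\<lambda>\<mu>. SUP m \<in> {m. (\<forall>\<epsilon>>0. m \<epsilon> \<in> co_ergodic X act) \<and> limitin (weak_star X) m \<mu> (at_right 0)}.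
              Limsup (at_right 0) (\<lambda>\<epsilon>. G (m \<epsilon>) \<epsilon>))"
    by (simp add: fun_eq_iff upper_mdim_M_def MG_def G_def)
  have lo: "lower_mdim_M X act Fs = (\<lambda>\<mu>. SUP m \<in> {m. (\<forall>\<epsilon>>0. m \<epsilon> \<in> co_ergodic X act) \<and> limitin (weak_star X) m \<mu> (at_right 0)}.
              Liminf (at_right 0) (\<lambda>\<epsilon>. G (m \<epsilon>) \<epsilon>))"
    by (simp add: fun_eq_iff lower_mdim_M_def MG_def G_def)
  show ?thesis
    unfolding up lo
  proof
    show "usc_on (subtopology (weak_star X) (invariant_measures X act))
     (\<lambda>\<mu>. SUP m\<in>{m. (\<forall>\<epsilon>>0. m \<epsilon> \<in> co_ergodic X act) \<and> limitin (weak_star X) m \<mu> (at_right 0)}.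
             Limsup (at_right 0) (\<lambda>\<epsilon>. G (m \<epsilon>) \<epsilon>))"
      by (rule usc_generic[OF S base glue_limsup]) blast+
    show "usc_on (subtopology (weak_star X) (invariant_measures X act))
     (\<lambda>\<mu>. SUP m\<in>{m. (\<forall>\<epsilon>>0. m \<epsilon> \<in> co_ergodic X act) \<and> limitin (weak_star X) m \<mu> (at_right 0)}.
             Liminf (at_right 0) (\<lambda>\<epsilon>. G (m \<epsilon>) \<epsilon>))"
      by (rule usc_generic[OF S base glue_liminf]) blast+
  qed
qed

end
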